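(* Let $\Gamma=([n],E)$ be a connected simple graph and let $M\subseteq[n]$ be a subset of maximal cardinality such that the induced subgraph $\Gamma|_M$ is isomorphic to the path $L_{|M|}$. Then for every integer $k\ge|M|$, $\Psi^k_q(\Gamma^{\mathbf 1})=\Psi^{|M|-1}_q(\Gamma^{\mathbf 1})$.
   Context: $L_r$ is the path graph on $r$ vertices. Decorated graphs: a decorated graph $\Gamma^w=(V,E,w)$ is a finite simple graph with $w:E\to\{1,2,\dots\}$; $\Gamma^{\mathbf 1}$ is $\Gamma$ with $w\equiv1$. For $S\subseteq V$: $\Gamma^w|_S$ is the induced decorated subgraph on $S$; $\Gamma^w/S$ is the decorated graph on $V\setminus S$ with an edge $uv$ whenever $\Gamma$ has a path from $u$ to $v$ with all internal vertices in $S$ (a direct edge counting as a path without internal vertices), decorated by the minimum over such paths of the sum of decorations along it. For an integer $m\ge0$, $\mathrm{pr}_m$ deletes all edges of decoration $>m$. Let $\mathcal{G}^{W,m}$ be the Hopf algebra spanned by isomorphism classes of decorated graphs (graded by number of vertices), with product disjoint union and coproduct $\Delta_m(\Gamma^w)=\sum_{S\subseteq V}\mathrm{pr}_m(\Gamma^w|_S)\otimes\mathrm{pr}_m(\Gamma^w/S)$. Let $\zeta_q(\Gamma^w)=q^{|V|-c(\Gamma)}$, $c$ = number of connected components. For $\alpha=(\alpha_1,\dots,\alpha_k)\models n$, $M_\alpha=\sum_{i_1<\cdots<i_k}x_{i_1}^{\alpha_1}\cdots x_{i_k}^{\alpha_k}$. Define $\Psi^m_q(\Gamma^w)=\sum_{\alpha\models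 n}(\zeta_q)_\alpha(\Gamma^w)M_\alpha$ with $(\zeta_q)_\alpha=\zeta_q^{\otimes k}\circ(p_{\alpha_1}\otimes\cdots\otimes p_{\alpha_k})\circ\Delta_m^{(k-1)}$ ($p_i$ projection to degree $i$, $\Delta_m^{(k-1)}$ iterated coproduct), i.e. the unique morphism of combinatorial Hopf algebras $(\mathcal{G}^{W,m},\zeta_q)\to(\mathcal{Q}Sym,\zeta)$. *)

theory Defs
  imports Main
begin

text \<open>A decorated graph is a pair (V, w): a finite vertex set V of naturals and a
 symmetric weight function w, where w u v = 0 means "no edge" and w u v \<ge> 1 is the
 decoration of the edge uv.\<close>

type_synonym dgraph = "nat set \<times> (nat \<Rightarrow> nat \<Rightarrow> nat)"

definition dg_restrict :: "nat set \<Rightarrow> dgraph \<Rightarrow> dgraph" where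
  "dg_restrict S G = (S, \<lambda>u v. if u \<in> S \<and> v \<in> S then snd G u v else 0)"

definition path_in :: "dgraph \<Rightarrow> nat set \<Rightarrow> nat \<Rightarrow> nat \<Rightarrow> nat list \<Rightarrow> bool" where
  "path_in G S u v p \<longleftrightarrow> length p \<ge> 2 \<and> hd p = u \<and> last p = v \<and> distinct p \<and>
     set p \<subseteq> fst G \<and>
     (\<forall>i < length p - 1. snd G (p ! i) (p ! Suc i) > 0) \<and>
     (\<forall>i. 0 < i \<and> i < length p - 1 \<longrightarrow> p ! i \<in> S)"

definition path_weight :: "dgraph \<Rightarrow> nat list \<Rightarrow> nat" where
  "path_weight G p = (\<Sum>i < length p - 1. snd G (p ! i) (p ! Suc i))"

definition dg_contract :: "nat set \<Rightarrow> dgraph \<Rightarrow> dgraph" where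
  "dg_contract S G = (fst G - S, \<lambda>u v.
     if u \<in> fst G - S \<and> v \<in> fst G - S \<and> u \<noteq> v \<and> (\<exists>p. path_in G S u v p)
     then (LEAST c. \<exists>p. path_in G S u v p \<and> path_weight G p = c) else 0)"

definition dg_pr :: "nat \<Rightarrow> dgraph \<Rightarrow> dgraph" where
  "dg_pr m G = (fst G, \<lambda>u v. if snd G u v \<le> m then snd G u v else 0)"

definition dg_adj :: "dgraph \<Rightarrow> (nat \<times> nat) set" where
  "dg_adj G = {(x, y). x \<in> fst G \<and> y \<in> fst G \<and> snd G x y > 0}"

definition ncomp :: "dgraph \<Rightarrow> nat" where
  "ncomp G = card (fst G // ((dg_adj G)\<^sup>*))"

definition zeta_q :: "'a::comm_ring_1 \<Rightarrow> dgraph \<Rightarrow> 'a" where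
  "zeta_q q G = q ^ (card (fst G) - ncomp G)"

text \<open>(zeta_q)_alpha computed with the coproduct Delta_m, iterating as
 Delta^(k-1) = (id \<otimes> Delta^(k-2)) \<circ> Delta_m; the empty composition gives the counit.\<close>
fun zeta_comp :: "nat \<Rightarrow> 'a::comm_ring_1 \<Rightarrow> nat list \<Rightarrow> dgraph \<Rightarrow> 'a" where
  "zeta_comp m q [] G = (if fst G = {} then 1 else 0)"
| "zeta_comp m q (a # as) G =
     (\<Sum>S \<in> {S. S \<subseteq> fst G \<and> card S = a}.
        zeta_q q (dg_pr m (dg_restrict S G)) * zeta_comp m q as (dg_pr m (dg_contract S G)))"

definition is_composition :: "nat list \<Rightarrow> nat \<Rightarrow> bool" where
  "is_composition \<alpha> n \<longleftrightarrow> (\<forall>a \<in> set \<alpha>. a > 0) \<and> sum_list \<alpha> = n"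

text \<open>Psi^m_q(G), represented by its coefficient vector in the monomial basis M_alpha
 of QSym (the M_alpha are linearly independent).\<close>
definition Psi :: "nat \<Rightarrow> 'a::comm_ring_1 \<Rightarrow> dgraph \<Rightarrow> nat list \<Rightarrow> 'a" where
  "Psi m q G \<alpha> = (if is_composition \<alpha> (card (fst G)) then zeta_comp m q \<alpha> G else 0)"

definition one_graph :: "nat \<Rightarrow> (nat \<Rightarrow> nat \<Rightarrow> bool) \<Rightarrow> dgraph" where
  "one_graph n E = ({1..n}, \<lambda>u v. if u \<in> {1..n} \<and> v \<in> {1..n} \<and> E u v then 1 else 0)"

definition simple_graph_on :: "nat set \<Rightarrow> (nat \<Rightarrow> nat \<Rightarrow> bool) \<Rightarrow> bool" where
  "simple_graph_on V E \<longleftrightarrow> (\<forall>u\<in>V. \<forall>v\<in>V. E u v \<longrightarrow> E v u) \<and> (\<forall>u\<in>V. \<not> E u u)"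

definition connected_on :: "nat set \<Rightarrow> (nat \<Rightarrow> nat \<Rightarrow> bool) \<Rightarrow> bool" where
  "connected_on V E \<longleftrightarrow> V \<noteq> {} \<and>
     (\<forall>u\<in>V. \<forall>v\<in>V. (u, v) \<in> {(x, y). x \<in> V \<and> y \<in> V \<and> E x y}\<^sup>*)"

definition path_graph_edge :: "nat \<Rightarrow> nat \<Rightarrow> bool" where
  "path_graph_edge i j \<longleftrightarrow> j = i + 1 \<or> i = j + 1"

definition induced_path :: "(nat \<Rightarrow> nat \<Rightarrow> bool) \<Rightarrow> nat set \<Rightarrow> bool" where
  "induced_path E M \<longleftrightarrow> (\<exists>f. bij_betw f {1..card M} M \<and>
     (\<forall>i\<in>{1..card M}. \<forall>j\<in>{1..card M}. E (f i) (f j) \<longleftrightarrow> path_graph_edge i j))"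

end

theory Submission
  imports Defs
begin


fun wkr :: "dgraph \<Rightarrow> nat set \<Rightarrow> nat list \<Rightarrow> bool" where
  "wkr G X [] = False"
| "wkr G X [x] = False"
| "wkr G X [x, y] = (x \<in> fst G \<and> y \<in> fst G \<and> 0 < snd G x y)"
| "wkr G X (x # y # z # r) = (x \<in> fst G \<and> 0 < snd G x y \<and> y \<in> X \<and> wkr G X (y # z # r))"

fun pw :: "dgraph \<Rightarrow> nat list \<Rightarrow> nat" where
  "pw G (x # y # r) = snd G x y + pw G (y # r)"
| "pw G _ = 0"

lemma wkr_len: "wkr G X p \<Longrightarrow> 2 \<le> length p"
  by (induction G X p rule: wkr.induct) auto
lemma wkr_set: "wkr G X p \<Longrightarrow> set p \<subseteq> fst G"
  by (induction G X p rule: wkr.induct) auto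
lemma wkr_mono: "wkr G X p \<Longrightarrow> X \<subseteq> Y \<Longrightarrow> wkr G Y p"
  by (induction G X p rule: wkr.induct) auto

lemma wkr_Cons2: "wkr G X (x # y # r) = (x \<in> fst G \<and> 0 < snd G x y \<and> (if r = [] then y \<in> fst G else y \<in> X \<and> wkr G X (y # r)))"
  by (cases r) auto

lemma allSuc: "(\<forall>i<Suc m. P i) \<longleftrightarrow> P 0 \<and> (\<forall>i<m. P (Suc i))"
  using less_Suc_eq_0_disj by auto

lemma intSuc: "(\<forall>i. 0 < i \<and> i < Suc (Suc m) \<longrightarrow> P i) \<longleftrightarrow> P 1 \<and> (\<forall>i. 0 < i \<and> i < Suc m \<longrightarrow> P (Suc i))"
  apply safe
    apply auto[2]
  by (metis One_nat_def Suc_less_eq Suc_pred bot_nat_0.not_eq_extremum)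

lemma wkr_iff: "wkr G X p \<longleftrightarrow> (2 \<le> length p \<and> set p \<subseteq> fst G \<and>
   (\<forall>i<length p - 1. 0 < snd G (p!i) (p!Suc i)) \<and> (\<forall>i. 0<i \<and> i<length p - 1 \<longrightarrow> p!i \<in> X))"
proof (induction G X p rule: wkr.induct)
  case (3 G X x y)
  then show ?case by (auto simp: less_Suc_eq)
next
  case (4 G X x y z r)
  have l: "length (x#y#z#r) - 1 = Suc (Suc (length r))" "length (y#z#r) - 1 = Suc (length r)" by auto
  define p where "p = y # z # r"
  have e1: "(\<forall>i<length (x#p) - 1. 0 < snd G ((x#p)!i) ((x#p)!Suc i)) \<longleftrightarrow>
     0 < snd G x y \<and> (\<forall>i<length p - 1. 0 < snd G (p!i) (p!Suc i))"
    unfolding p_def l allSuc by simp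
  have e2: "(\<forall>i. 0<i \<and> i<length (x#p) - 1 \<longrightarrow> (x#p)!i \<in> X) \<longleftrightarrow>
     y \<in> X \<and> (\<forall>i. 0<i \<and> i<length p - 1 \<longrightarrow> p!i \<in> X)"
    unfolding p_def l intSuc by simp
  have e3: "set (x#p) \<subseteq> fst G \<longleftrightarrow> x \<in> fst G \<and> set p \<subseteq> fst G" by simp
  have e4: "2 \<le> length (x#p)" "2 \<le> length p" unfolding p_def by auto
  have w: "wkr G X (x#p) \<longleftrightarrow> x \<in> fst G \<and> 0<snd G x y \<and> y \<in> X \<and> wkr G X p" by (simp add: p_def)
  have IH: "wkr G X p \<longleftrightarrow> (2 \<le> length p \<and> set p \<subseteq> fst G \<and>
   (\<forall>i<length p - 1. 0 < snd G (p!i) (p!Suc i)) \<and> (\<forall>i. 0<i \<and> i<length p - 1 \<longrightarrow> p!i \<in> X))"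
    using 4 unfolding p_def .
  have "wkr G X (x#p) \<longleftrightarrow> (2 \<le> length (x#p) \<and> set (x#p) \<subseteq> fst G \<and>
   (\<forall>i<length (x#p) - 1. 0 < snd G ((x#p)!i) ((x#p)!Suc i)) \<and> (\<forall>i. 0<i \<and> i<length (x#p) - 1 \<longrightarrow> (x#p)!i \<in> X))"
    unfolding w IH e1 e2 e3 using e4 by blast
  then show ?case unfolding p_def .
qed auto

lemma path_in_iff: "path_in G S u v p \<longleftrightarrow> wkr G S p \<and> hd p = u \<and> last p = v \<and> distinct p"
  unfolding path_in_def wkr_iff by auto

lemma path_weight_pw: "path_weight G p = pw G p"
proof (induction G p rule: pw.induct)
  case (1 G x y r)
  have "path_weight G (x # y # r) = snd G x y + path_weight G (y # r)"
    unfolding path_weight_def by (simp add: sum.lessThan_Suc_shift del: sum.lessThan_Suc)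
  then show ?case using 1 by simp
qed (auto simp: path_weight_def)

lemma wkr_append: "a \<noteq> [] \<Longrightarrow> b \<noteq> [] \<Longrightarrow>
   wkr G X (a @ x # b) \<longleftrightarrow> wkr G X (a @ [x]) \<and> wkr G X (x # b) \<and> x \<in> X"
proof (induction a)
  case (Cons y a)
  show ?case
  proof (cases a)
    case Nil
    then show ?thesis using Cons.prems wkr_set[of G X "x#b"]
      by (cases b) auto
  next
    case (Cons y' a')
    then show ?thesis using Cons.IH Cons.prems by (auto simp: wkr_Cons2 simp del: wkr.simps(4))
  qed
qed simp

lemma pw_append: "pw G (a @ x # b) = pw G (a @ [x]) + pw G (x # b)"
proof (induction a)
  case (Cons y a)
  then show ?case by (cases a) auto
qed simp

lemma wkr_interior: "wkr G X (u # a @ [x]) \<Longrightarrow> set a \<subseteq> Y \<Longrightarrow> wkr G Y (u # a @ [x])"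
proof (induction a arbitrary: u)
  case (Cons y a)
  then show ?case by (cases a) auto
qed simp

lemma wkr_dup: "wkr G X (a @ x # m @ x # c) \<Longrightarrow> a \<noteq> [] \<or> c \<noteq> [] \<Longrightarrow> wkr G X (a @ x # c)"
proof -
  assume w: "wkr G X (a @ x # m @ x # c)" and ne: "a \<noteq> [] \<or> c \<noteq> []"
  have A: "a \<noteq> [] \<Longrightarrow> wkr G X (a @ [x]) \<and> x \<in> X" using wkr_append[of a "m @ x # c" G X x] w by auto
  have C: "c \<noteq> [] \<Longrightarrow> wkr G X (x # c) \<and> x \<in> X" using wkr_append[of "a @ x # m" c G X x] w by auto
  show ?thesis
  proof (cases "a = []")
    case True then show ?thesis using C ne by auto
  next
    case False
    show ?thesis
    proof (cases "c = []")
      case True then show ?thesis using A False by auto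
    next
      case f2: False
      then show ?thesis using A C False wkr_append[of a c G X x] by auto
    qed
  qed
qed

lemma wkr_chord: "wkr G X (a @ x # m @ y # c) \<Longrightarrow> wkr G X [x, y] \<Longrightarrow> wkr G X (a @ x # y # c)"
proof -
  assume w: "wkr G X (a @ x # m @ y # c)" and xy: "wkr G X [x, y]"
  have A: "a \<noteq> [] \<Longrightarrow> wkr G X (a @ [x]) \<and> x \<in> X" using wkr_append[of a "m @ y # c" G X x] w by auto
  have C: "c \<noteq> [] \<Longrightarrow> wkr G X (y # c) \<and> y \<in> X" using wkr_append[of "a @ x # m" c G X y] w by auto
  have B: "wkr G X (x # y # c)"
  proof (cases "c = []")
    case True then show ?thesis using xy by simp
  next
    case False then show ?thesis using C xy wkr_append[of "[x]" c G X y] by auto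
  qed
  show ?thesis
  proof (cases "a = []")
    case True then show ?thesis using B by auto
  next
    case False then show ?thesis using A B wkr_append[of a "y # c" G X x] by auto
  qed
qed



lemma g0_fst[simp]: "fst (one_graph n E) = {1..n}" by (simp add: one_graph_def)
lemma g0_pos: "0 < snd (one_graph n E) x y \<longleftrightarrow> x \<in> {1..n} \<and> y \<in> {1..n} \<and> E x y"
  by (simp add: one_graph_def)

lemma min_walk_exists:
  assumes "wkr G X p" "hd p = u" "last p = v"
  shows "\<exists>p'. wkr G X p' \<and> hd p' = u \<and> last p' = v \<and> length p' \<le> length p \<and>
     (\<forall>q. wkr G X q \<and> hd q = u \<and> last q = v \<longrightarrow> length p' \<le> length q)"
proof -
  have "\<exists>x. (wkr G X x \<and> hd x = u \<and> last x = v) \<and> (\<forall>y. (wkr G X y \<and> hd y = u \<and> last y = v) \<longrightarrow> length x \<le> length y)"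
    using ex_has_least_nat[of "\<lambda>x. wkr G X x \<and> hd x = u \<and> last x = v" p length] assms by blast
  then show ?thesis using assms by blast
qed

definition minw where "minw G X u v p \<longleftrightarrow> wkr G X p \<and> hd p = u \<and> last p = v \<and>
     (\<forall>q. wkr G X q \<and> hd q = u \<and> last q = v \<longrightarrow> length p \<le> length q)"

lemma minw_distinct:
  assumes "minw G X u v p" "u \<noteq> v"
  shows "distinct p"
proof (rule ccontr)
  assume "\<not> distinct p"
  then obtain xs y ys zs where p: "p = xs @ [y] @ ys @ [y] @ zs" using not_distinct_decomp by blast
  have w: "wkr G X p" "hd p = u" "last p = v" using assms(1) unfolding minw_def by auto
  show False
  proof (cases "xs = [] \<and> zs = []")
    case True
    then show ?thesis using w assms(2) p by auto
  next
    case False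
    define q where "q = xs @ y # zs"
    have "wkr G X q" unfolding q_def using wkr_dup[of G X xs y ys zs] w p False by auto
    moreover have "hd q = u" using w p unfolding q_def by (cases xs) auto
    moreover have "last q = v" using w p unfolding q_def by (cases zs) auto
    ultimately have "length p \<le> length q" using assms(1) unfolding minw_def by blast
    then show False unfolding p q_def by simp
  qed
qed

lemma decomp_ij:
  assumes "i < j" "j < length p"
  shows "p = take i p @ p!i # take (j - Suc i) (drop (Suc i) p) @ p!j # drop (Suc j) p"
proof -
  have a: "p = take i p @ p!i # drop (Suc i) p" using assms by (simp add: id_take_nth_drop)
  have b: "drop (Suc i) p = take (j - Suc i) (drop (Suc i) p) @ drop (j - Suc i) (drop (Suc i) p)" by (rule append_take_drop_id[symmetric])
  have c: "drop (j - Suc i) (drop (Suc i) p) = drop j p" using assms by simp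
  have d: "drop j p = p!j # drop (Suc j) p" using assms by (simp add: Cons_nth_drop_Suc)
  show ?thesis using a b c d by metis
qed

lemma minw_chordless:
  assumes "minw (one_graph n E) X u v p" "i + 1 < j" "j < length p"
  shows "\<not> E (p!i) (p!j)"
proof
  assume e: "E (p!i) (p!j)"
  have w: "wkr (one_graph n E) X p" "hd p = u" "last p = v" using assms(1) unfolding minw_def by auto
  define A where "A = take i p"
  define Mi where "Mi = take (j - Suc i) (drop (Suc i) p)"
  define C where "C = drop (Suc j) p"
  have p: "p = A @ p!i # Mi @ p!j # C" unfolding A_def Mi_def C_def using decomp_ij[of i j p] assms by simp
  have Mne: "Mi \<noteq> []" unfolding Mi_def using assms by simp
  have "p!i \<in> set p" "p!j \<in> set p" using assms by auto
  then have inV: "p!i \<in> {1..n}" "p!j \<in> {1..n}" using wkr_set[OF w(1)] by auto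
  have xy: "wkr (one_graph n E) X [p!i, p!j]" using inV e by (simp add: g0_pos)
  obtain x y where xy_def: "x = p!i" "y = p!j" by blast
  have p2: "p = A @ x # Mi @ y # C" using p xy_def by simp
  define q where "q = A @ x # y # C"
  have xy2: "wkr (one_graph n E) X [x, y]" using xy xy_def by simp
  have wp2: "wkr (one_graph n E) X (A @ x # Mi @ y # C)" using w(1) p2 by simp
  have "wkr (one_graph n E) X q" unfolding q_def using wkr_chord[OF wp2 xy2] .
  moreover have "hd q = u" using w p2 unfolding q_def by (cases A) auto
  moreover have "last q = v" using w p2 unfolding q_def by (cases C) auto
  ultimately have "length p \<le> length q" using assms(1) unfolding minw_def by blast
  then show False using Mne p2 unfolding q_def by simp
qed

lemma walk_edge: "wkr G X p \<Longrightarrow> k < length p - 1 \<Longrightarrow> 0 < snd G (p!k) (p!Suc k)"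
  unfolding wkr_iff by blast

lemma minw_induced:
  assumes sg: "simple_graph_on {1..n} E" and m: "minw (one_graph n E) X u v p" and uv: "u \<noteq> v"
  shows "induced_path E (set p)"
proof -
  have w: "wkr (one_graph n E) X p" using m unfolding minw_def by auto
  have d: "distinct p" using minw_distinct[OF m uv] .
  have sV: "set p \<subseteq> {1..n}" using wkr_set[OF w] by simp
  have cp: "card (set p) = length p" using d distinct_card by blast
  define f where "f = (\<lambda>i. p ! (i - 1))"
  have bij: "bij_betw f {1..length p} (set p)"
  proof (rule bij_betw_imageI)
    show "inj_on f {1..length p}"
      unfolding inj_on_def f_def using d nth_eq_iff_index_eq by fastforce
    show "f ` {1..length p} = set p"
    proof
      show "f ` {1..length p} \<subseteq> set p" unfolding f_def by auto
      show "set p \<subseteq> f ` {1..length p}"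
      proof
        fix x assume "x \<in> set p"
        then obtain k where k: "k < length p" "p!k = x" by (auto simp: in_set_conv_nth)
        then have "f (Suc k) = x" "Suc k \<in> {1..length p}" unfolding f_def by auto
        then show "x \<in> f ` {1..length p}" by force
      qed
    qed
  qed
  have symE: "\<And>a b. a \<in> set p \<Longrightarrow> b \<in> set p \<Longrightarrow> E a b \<Longrightarrow> E b a"
    using sg sV unfolding simple_graph_on_def by blast
  have irr: "\<And>a. a \<in> set p \<Longrightarrow> \<not> E a a"
    using sg sV unfolding simple_graph_on_def by blast
  have inp: "\<And>i. i \<in> {1..length p} \<Longrightarrow> f i \<in> set p" unfolding f_def by auto
  have edge: "E (f i) (f j) \<longleftrightarrow> path_graph_edge i j" if ij: "i \<in> {1..length p}" "j \<in> {1..length p}" for i j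
  proof
    assume e: "E (f i) (f j)"
    show "path_graph_edge i j"
    proof (rule ccontr)
      assume "\<not> path_graph_edge i j"
      then have "i = j \<or> i + 1 < j \<or> j + 1 < i" unfolding path_graph_edge_def by auto
      moreover have "i \<noteq> j" using e irr inp ij by auto
      moreover have "\<not> i + 1 < j"
      proof
        assume "i + 1 < j"
        then have "i - 1 + 1 < j - 1" "j - 1 < length p" using ij by auto
        then show False using minw_chordless[OF m, of "i-1" "j-1"] e unfolding f_def by auto
      qed
      moreover have "\<not> j + 1 < i"
      proof
        assume "j + 1 < i"
        then have "j - 1 + 1 < i - 1" "i - 1 < length p" using ij by auto
        moreover have "E (f j) (f i)" using e symE inp ij by auto
        ultimately show False using minw_chordless[OF m, of "j-1" "i-1"] unfolding f_def by auto
      qed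
      ultimately show False by blast
    qed
  next
    assume pe: "path_graph_edge i j"
    have k: "\<And>k. k < length p - 1 \<Longrightarrow> E (p!k) (p!Suc k)" using walk_edge[OF w] by (simp add: g0_pos)
    show "E (f i) (f j)"
    proof (cases "j = i + 1")
      case True
      then show ?thesis using k[of "i-1"] ij unfolding f_def by auto
    next
      case False
      then have "i = j + 1" using pe unfolding path_graph_edge_def by auto
      then have "E (f j) (f i)" using k[of "j-1"] ij unfolding f_def by auto
      then show ?thesis using symE inp ij by auto
    qed
  qed
  show ?thesis unfolding induced_path_def cp using bij edge by blast
qed



definition Inv :: "nat \<Rightarrow> (nat \<Rightarrow> nat \<Rightarrow> bool) \<Rightarrow> dgraph \<Rightarrow> bool" where
"Inv n E H \<longleftrightarrow> fst H \<subseteq> {1..n} \<and>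
 (\<forall>u v. 0 < snd H u v \<longrightarrow> u \<in> fst H \<and> v \<in> fst H \<and> u \<noteq> v \<and>
    (\<exists>p. wkr (one_graph n E) ({1..n} - fst H) p \<and> hd p = u \<and> last p = v \<and> length p - 1 \<le> snd H u v)) \<and>
 (\<forall>u v p. u \<in> fst H \<longrightarrow> v \<in> fst H \<longrightarrow> u \<noteq> v \<longrightarrow> wkr (one_graph n E) ({1..n} - fst H) p \<longrightarrow>
    hd p = u \<longrightarrow> last p = v \<longrightarrow> 0 < snd H u v \<and> snd H u v \<le> length p - 1)"

lemma Inv_V: "Inv n E H \<Longrightarrow> fst H \<subseteq> {1..n}"
  unfolding Inv_def by (rule conjunct1)

lemma Inv_a:
  assumes "Inv n E H" "0 < snd H u v"
  shows "u \<in> fst H \<and> v \<in> fst H \<and> u \<noteq> v \<and>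
    (\<exists>p. wkr (one_graph n E) ({1..n} - fst H) p \<and> hd p = u \<and> last p = v \<and> length p - 1 \<le> snd H u v)"
proof -
  have "\<forall>u v. 0 < snd H u v \<longrightarrow> u \<in> fst H \<and> v \<in> fst H \<and> u \<noteq> v \<and>
    (\<exists>p. wkr (one_graph n E) ({1..n} - fst H) p \<and> hd p = u \<and> last p = v \<and> length p - 1 \<le> snd H u v)"
    using assms(1) unfolding Inv_def by (rule conjunct1[OF conjunct2])
  then show ?thesis using assms(2) by (elim allE impE)
qed

lemma Inv_b:
  assumes "Inv n E H" "u \<in> fst H" "v \<in> fst H" "u \<noteq> v" "wkr (one_graph n E) ({1..n} - fst H) p"
    "hd p = u" "last p = v"
  shows "0 < snd H u v \<and> snd H u v \<le> length p - 1"
proof -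
  have "\<forall>u v p. u \<in> fst H \<longrightarrow> v \<in> fst H \<longrightarrow> u \<noteq> v \<longrightarrow> wkr (one_graph n E) ({1..n} - fst H) p \<longrightarrow>
    hd p = u \<longrightarrow> last p = v \<longrightarrow> 0 < snd H u v \<and> snd H u v \<le> length p - 1"
    using assms(1) unfolding Inv_def by (rule conjunct2[OF conjunct2])
  then show ?thesis using assms(2-) by blast
qed

lemma wkr_empty: "wkr G X p \<Longrightarrow> X = {} \<Longrightarrow> length p = 2"
  by (induction G X p rule: wkr.induct) auto

lemma Inv_one:
  assumes "simple_graph_on {1..n} E"
  shows "Inv n E (one_graph n E)"
proof -
  have A: "u \<in> fst (one_graph n E) \<and> v \<in> fst (one_graph n E) \<and> u \<noteq> v \<and>
    (\<exists>p. wkr (one_graph n E) ({1..n} - fst (one_graph n E)) p \<and> hd p = u \<and> last p = v \<and>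
         length p - 1 \<le> snd (one_graph n E) u v)" if h: "0 < snd (one_graph n E) u v" for u v
  proof -
    have e: "u \<in> {1..n}" "v \<in> {1..n}" "E u v" using h by (auto simp: g0_pos)
    then have "u \<noteq> v" using assms unfolding simple_graph_on_def by auto
    moreover have "wkr (one_graph n E) ({1..n} - fst (one_graph n E)) [u, v]" using h e by simp
    ultimately show ?thesis using e h by (intro conjI exI[of _ "[u,v]"]) auto
  qed
  have B: "0 < snd (one_graph n E) u v \<and> snd (one_graph n E) u v \<le> length p - 1"
    if w: "wkr (one_graph n E) ({1..n} - fst (one_graph n E)) p" and hl: "hd p = u" "last p = v" for u v p
  proof -
    have l2: "length p = 2" using wkr_empty[OF w] by simp
    then obtain a b where "p = [a, b]" by (cases p; cases "tl p") auto
    then have "p = [u, v]" using hl by simp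
    then have "0 < snd (one_graph n E) u v" using w by simp
    moreover then have "snd (one_graph n E) u v = 1" by (simp add: one_graph_def split: if_splits)
    ultimately show ?thesis using l2 by simp
  qed
  show ?thesis unfolding Inv_def using A B by simp
qed

lemma Inv_bound:
  assumes sg: "simple_graph_on {1..n} E" and I: "Inv n E H"
    and mx: "\<forall>M'. M' \<subseteq> {1..n} \<and> induced_path E M' \<longrightarrow> card M' \<le> card M"
  shows "snd H u v \<le> card M - 1"
proof (cases "0 < snd H u v")
  case True
  let ?X = "{1..n} - fst H"
  obtain p where p: "wkr (one_graph n E) ?X p" "hd p = u" "last p = v" and uv: "u \<noteq> v" "u \<in> fst H" "v \<in> fst H"
    using Inv_a[OF I True] by blast
  obtain p' where p': "minw (one_graph n E) ?X u v p'"
    using min_walk_exists[OF p] unfolding minw_def by blast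
  have le: "snd H u v \<le> length p' - 1" using Inv_b[OF I uv(2,3,1), of p'] p' unfolding minw_def by blast
  have ip: "induced_path E (set p')" using minw_induced[OF sg p' uv(1)] .
  have "set p' \<subseteq> {1..n}" using wkr_set p' unfolding minw_def by fastforce
  then have "card (set p') \<le> card M" using mx ip by blast
  moreover have "card (set p') = length p'" using minw_distinct[OF p' uv(1)] distinct_card by blast
  ultimately show ?thesis using le by simp
qed simp

lemma pw_pos: "wkr G X p \<Longrightarrow> 0 < pw G p"
  by (induction G X p rule: wkr.induct) auto

lemma lift_walk:
  assumes I: "Inv n E H" and S: "S \<subseteq> fst H"
  shows "wkr H S h \<Longrightarrow> \<exists>q. wkr (one_graph n E) ({1..n} - (fst H - S)) q \<and> hd q = hd h \<and> last q = last h \<and>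
            length q - 1 \<le> pw H h"
proof (induction h rule: induct_list012)
  case (3 x y zs)
  have XX: "{1..n} - fst H \<subseteq> {1..n} - (fst H - S)" by auto
  have pos: "0 < snd H x y" using 3(3) by (cases zs) auto
  obtain q1 where q1: "wkr (one_graph n E) ({1..n} - fst H) q1" "hd q1 = x" "last q1 = y" "length q1 - 1 \<le> snd H x y"
    using Inv_a[OF I pos] by blast
  have q1': "wkr (one_graph n E) ({1..n} - (fst H - S)) q1" using wkr_mono[OF q1(1) XX] .
  show ?case
  proof (cases zs)
    case Nil
    then show ?thesis using q1' q1 by (intro exI[of _ q1]) auto
  next
    case (Cons z r)
    have w2: "wkr H S (y # zs)" and yS: "y \<in> S" using 3(3) Cons by auto
    obtain q2 where q2: "wkr (one_graph n E) ({1..n} - (fst H - S)) q2" "hd q2 = y" "last q2 = last (y # zs)"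
       "length q2 - 1 \<le> pw H (y # zs)" using 3(2)[OF w2] by auto
    have l1: "2 \<le> length q1" "2 \<le> length q2" using wkr_len q1(1) q2(1) by auto
    have yV: "y \<in> {1..n} - (fst H - S)" using yS S Inv_V[OF I] by auto
    have e1: "q1 = butlast q1 @ [y]" using q1(3) l1
      by (metis append_butlast_last_id list.size(3) not_numeral_le_zero)
    have e2: "q2 = y # tl q2" using q2(2) l1 by (cases q2) auto
    have z1: "length (butlast q1) \<noteq> 0" "length (tl q2) \<noteq> 0" using l1 by auto
    have ne: "butlast q1 \<noteq> []" "tl q2 \<noteq> []" using z1 by (metis list.size(3))+
    define q where "q = butlast q1 @ y # tl q2"
    have "wkr (one_graph n E) ({1..n} - (fst H - S)) q"
    proof -
      have A: "wkr (one_graph n E) ({1..n} - (fst H - S)) (butlast q1 @ [y])" using q1' e1 by metis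
      have B: "wkr (one_graph n E) ({1..n} - (fst H - S)) (y # tl q2)" using q2(1) e2 by metis
      show ?thesis unfolding q_def using wkr_append[OF ne, of "one_graph n E" _ y] A B yV by blast
    qed
    moreover have "hd q = x"
    proof -
      have a: "hd q = hd (butlast q1)" unfolding q_def using ne(1) by (simp add: hd_append2)
      have b: "hd (butlast q1 @ [y]) = hd (butlast q1)" using ne(1) by (simp add: hd_append2)
      show ?thesis using a b e1 q1(2) by metis
    qed
    moreover have "last q = last (x # y # zs)"
    proof -
      have a: "last q = last (tl q2)" unfolding q_def using ne(2) by simp
      have b: "last (y # tl q2) = last (tl q2)" using ne(2) by simp
      show ?thesis using a b e2 q2(3) by (metis last_ConsR list.distinct(1))
    qed
    moreover have "length q - 1 \<le> pw H (x # y # zs)"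
    proof -
      have "length q = length q1 + length q2 - 1" unfolding q_def using l1 by (cases q2) auto
      then show ?thesis using q1(4) q2(4) l1 by simp
    qed
    ultimately show ?thesis unfolding list.sel(1) by blast
  qed
qed auto

lemma split_walk:
  assumes I: "Inv n E H" and S: "S \<subseteq> fst H"
  shows "distinct p \<Longrightarrow> wkr (one_graph n E) ({1..n} - (fst H - S)) p \<Longrightarrow> hd p \<in> fst H \<Longrightarrow> last p \<in> fst H \<Longrightarrow>
     \<exists>h. wkr H S h \<and> hd h = hd p \<and> last h = last p \<and> distinct h \<and> set h \<subseteq> set p \<and> pw H h \<le> length p - 1"
proof (induction "length p" arbitrary: p rule: less_induct)
  case less
  let ?G = "one_graph n E"
  let ?Y = "{1..n} - (fst H - S)"
  have l2: "2 \<le> length p" using wkr_len[OF less.prems(2)] .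
  obtain u t where p: "p = u # t" using l2 by (cases p) auto
  have tne: "t \<noteq> []" using l2 p by auto
  have "last t \<in> fst H" using less.prems(4) p tne by simp
  then have "\<exists>x\<in>set t. x \<in> fst H" using tne by auto
  then obtain a x b where t: "t = a @ x # b" "x \<in> fst H" "\<forall>y\<in>set a. y \<notin> fst H"
    using split_list_first_prop[of t "\<lambda>x. x \<in> fst H"] by blast
  have pd: "p = (u # a) @ x # b" using p t by simp
  have w1: "wkr ?G ?Y (u # a @ [x])"
  proof (cases "b = []")
    case True then show ?thesis using less.prems(2) pd by simp
  next
    case False then show ?thesis using wkr_append[of "u # a" b ?G ?Y x] less.prems(2) pd by simp
  qed
  have sV: "set p \<subseteq> {1..n}" using wkr_set[OF less.prems(2)] by simp
  have aY: "set a \<subseteq> {1..n} - fst H" using sV t pd by auto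
  have seg: "wkr ?G ({1..n} - fst H) (u # a @ [x])" using wkr_interior[OF w1 aY] .
  have ux: "u \<noteq> x" using less.prems(1) pd by auto
  have uH: "u \<in> fst H" using less.prems(3) p by simp
  have wux: "0 < snd H u x \<and> snd H u x \<le> length (u # a @ [x]) - 1"
    using Inv_b[OF I uH t(2) ux seg] by simp
  show ?case
  proof (cases "b = []")
    case True
    have "wkr H S [u, x]" using uH t(2) wux by simp
    moreover have "last p = x" using pd True by simp
    moreover have "pw H [u, x] \<le> length p - 1" using wux pd True by simp
    ultimately show ?thesis using ux p pd by (intro exI[of _ "[u, x]"]) auto
  next
    case False
    have wx: "wkr ?G ?Y (x # b)" "x \<in> ?Y" using wkr_append[of "u # a" b ?G ?Y x] less.prems(2) pd False by auto
    have xS: "x \<in> S" using wx(2) t(2) by auto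
    have lt: "length (x # b) < length p" using pd by simp
    have dxb: "distinct (x # b)" using less.prems(1) pd by simp
    have lxb: "last (x # b) = last p" using pd by simp
    obtain h' where h': "wkr H S h'" "hd h' = x" "last h' = last (x # b)" "distinct h'" "set h' \<subseteq> set (x # b)"
      "pw H h' \<le> length (x # b) - 1"
      using less.hyps[OF lt dxb wx(1)] t(2) less.prems(4) lxb by auto
    have lh: "2 \<le> length h'" using wkr_len[OF h'(1)] .
    obtain r where e: "h' = x # r" using h'(2) lh by (cases h') auto
    have tne': "r \<noteq> []" using lh e by auto
    have W: "wkr H S (u # h')" using uH wux xS h'(1) e tne' by (simp add: wkr_Cons2 del: wkr.simps(4))
    have "pw H (u # h') = snd H u x + pw H h'" using e by simp
    then have P: "pw H (u # h') \<le> length p - 1" using wux h'(6) pd by simp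
    have uni: "u \<notin> set (x # b)" using less.prems(1) pd by auto
    have D: "distinct (u # h')" using h'(4) h'(5) uni by auto
    have Se: "set (u # h') \<subseteq> set p" using h'(5) pd by auto
    have L: "last (u # h') = last p" using h'(3) lxb lh by (cases h') auto
    show ?thesis using W D Se L P p by (intro exI[of _ "u # h'"]) auto
  qed
qed

lemma least_facts:
  assumes "\<exists>p. path_in H S u v p"
  shows "\<exists>p. path_in H S u v p \<and> path_weight H p = (LEAST c. \<exists>p. path_in H S u v p \<and> path_weight H p = c)"
    and "\<And>p. path_in H S u v p \<Longrightarrow> (LEAST c. \<exists>p. path_in H S u v p \<and> path_weight H p = c) \<le> path_weight H p"
proof -
  obtain p0 where "path_in H S u v p0" using assms by blast
  then have ex: "\<exists>c p. path_in H S u v p \<and> path_weight H p = c" by blast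
  show "\<exists>p. path_in H S u v p \<and> path_weight H p = (LEAST c. \<exists>p. path_in H S u v p \<and> path_weight H p = c)"
    using LeastI_ex[OF ex] .
  fix p assume "path_in H S u v p"
  then show "(LEAST c. \<exists>p. path_in H S u v p \<and> path_weight H p = c) \<le> path_weight H p"
    by (intro Least_le) blast
qed

lemma contract_Inv:
  assumes I: "Inv n E H" and S: "S \<subseteq> fst H"
  shows "Inv n E (dg_contract S H)"
proof -
  let ?C = "dg_contract S H"
  let ?G = "one_graph n E"
  have fstc: "fst ?C = fst H - S" by (simp add: dg_contract_def)
  have sndc: "snd ?C u v = (if u \<in> fst H - S \<and> v \<in> fst H - S \<and> u \<noteq> v \<and> (\<exists>p. path_in H S u v p)
     then (LEAST c. \<exists>p. path_in H S u v p \<and> path_weight H p = c) else 0)" for u v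
    by (simp add: dg_contract_def)
  have P0: "fst ?C \<subseteq> {1..n}" using fstc Inv_V[OF I] by auto
  have PA: "u \<in> fst ?C \<and> v \<in> fst ?C \<and> u \<noteq> v \<and>
    (\<exists>p. wkr ?G ({1..n} - fst ?C) p \<and> hd p = u \<and> last p = v \<and> length p - 1 \<le> snd ?C u v)"
    if pos: "0 < snd ?C u v" for u v
  proof -
    have cond: "u \<in> fst H - S \<and> v \<in> fst H - S \<and> u \<noteq> v \<and> (\<exists>p. path_in H S u v p)"
      using pos sndc[of u v] by (auto split: if_splits)
    then have val: "snd ?C u v = (LEAST c. \<exists>p. path_in H S u v p \<and> path_weight H p = c)"
      using sndc[of u v] by simp
    obtain p0 where p0: "path_in H S u v p0" "path_weight H p0 = snd ?C u v"
      using least_facts(1)[of H S u v] cond val by auto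
    have w0: "wkr H S p0" "hd p0 = u" "last p0 = v" using p0(1) path_in_iff by auto
    obtain q where q: "wkr ?G ({1..n} - (fst H - S)) q" "hd q = hd p0" "last q = last p0" "length q - 1 \<le> pw H p0"
      using lift_walk[OF I S w0(1)] by blast
    have "length q - 1 \<le> snd ?C u v" using q(4) p0(2) path_weight_pw by metis
    then show ?thesis using cond q w0 fstc by auto
  qed
  have PB: "0 < snd ?C u v \<and> snd ?C u v \<le> length p - 1"
    if h: "u \<in> fst ?C" "v \<in> fst ?C" "u \<noteq> v" "wkr ?G ({1..n} - fst ?C) p" "hd p = u" "last p = v" for u v p
  proof -
    have w: "wkr ?G ({1..n} - (fst H - S)) p" using h(4) fstc by simp
    obtain p' where p': "minw ?G ({1..n} - (fst H - S)) u v p'" "length p' \<le> length p"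
      using min_walk_exists[OF w h(5,6)] unfolding minw_def by blast
    have d: "distinct p'" using minw_distinct[OF p'(1) h(3)] .
    have w': "wkr ?G ({1..n} - (fst H - S)) p'" "hd p' = u" "last p' = v" using p'(1) unfolding minw_def by auto
    have uvH: "u \<in> fst H" "v \<in> fst H" using h fstc by auto
    obtain hh where hh: "wkr H S hh" "hd hh = u" "last hh = v" "distinct hh" "pw H hh \<le> length p' - 1"
      using split_walk[OF I S d w'(1)] w' uvH by auto
    have pin: "path_in H S u v hh" using hh path_in_iff by auto
    have cond: "u \<in> fst H - S \<and> v \<in> fst H - S \<and> u \<noteq> v \<and> (\<exists>p. path_in H S u v p)"
      using h fstc pin by auto
    then have val: "snd ?C u v = (LEAST c. \<exists>p. path_in H S u v p \<and> path_weight H p = c)"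
      using sndc[of u v] by simp
    have le: "snd ?C u v \<le> path_weight H hh" using least_facts(2)[OF _ pin] val pin by auto
    obtain p0 where p0: "path_in H S u v p0" "path_weight H p0 = snd ?C u v"
      using least_facts(1)[of H S u v] cond val by auto
    have "0 < pw H p0" using pw_pos[of H S p0] p0(1) path_in_iff by auto
    then have "0 < snd ?C u v" using p0(2) path_weight_pw by metis
    moreover have "snd ?C u v \<le> length p - 1" using le hh(5) p'(2) path_weight_pw[of H hh] by simp
    ultimately show ?thesis by simp
  qed
  show ?thesis unfolding Inv_def
  proof (intro conjI)
    show "fst ?C \<subseteq> {1..n}" by (rule P0)
    show "\<forall>u v. 0 < snd ?C u v \<longrightarrow> u \<in> fst ?C \<and> v \<in> fst ?C \<and> u \<noteq> v \<and>
    (\<exists>p. wkr ?G ({1..n} - fst ?C) p \<and> hd p = u \<and> last p = v \<and> length p - 1 \<le> snd ?C u v)"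
      using PA by blast
    show "\<forall>u v p. u \<in> fst ?C \<longrightarrow> v \<in> fst ?C \<longrightarrow> u \<noteq> v \<longrightarrow> wkr ?G ({1..n} - fst ?C) p \<longrightarrow>
    hd p = u \<longrightarrow> last p = v \<longrightarrow> 0 < snd ?C u v \<and> snd ?C u v \<le> length p - 1"
      using PB by blast
  qed
qed

lemma pr_id: "(\<And>u v. snd G u v \<le> m) \<Longrightarrow> dg_pr m G = G"
  unfolding dg_pr_def by (rule prod_eqI) (auto intro!: ext)

lemma zc_eq:
  assumes bound: "\<And>H u v. Inv n E H \<Longrightarrow> snd H u v \<le> m0" and km: "m0 \<le> k"
  shows "Inv n E H \<Longrightarrow> zeta_comp k q \<alpha> H = zeta_comp m0 q \<alpha> H"
proof (induction \<alpha> arbitrary: H)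
  case Nil
  then show ?case by simp
next
  case (Cons a as)
  have "zeta_q q (dg_pr k (dg_restrict S H)) * zeta_comp k q as (dg_pr k (dg_contract S H)) =
        zeta_q q (dg_pr m0 (dg_restrict S H)) * zeta_comp m0 q as (dg_pr m0 (dg_contract S H))"
    if "S \<in> {S. S \<subseteq> fst H \<and> card S = a}" for S
  proof -
    have Ssub: "S \<subseteq> fst H" using that by simp
    have IC: "Inv n E (dg_contract S H)" using contract_Inv[OF Cons.prems Ssub] .
    have br: "snd (dg_restrict S H) u v \<le> m0" for u v
      using bound[OF Cons.prems, of u v] by (simp add: dg_restrict_def)
    have bc: "snd (dg_contract S H) u v \<le> m0" for u v using bound[OF IC] .
    have r1: "dg_pr k (dg_restrict S H) = dg_restrict S H" using br km by (intro pr_id) (meson le_trans)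
    have r2: "dg_pr m0 (dg_restrict S H) = dg_restrict S H" using br by (intro pr_id) auto
    have c1: "dg_pr k (dg_contract S H) = dg_contract S H" using bc km by (intro pr_id) (meson le_trans)
    have c2: "dg_pr m0 (dg_contract S H) = dg_contract S H" using bc by (intro pr_id) auto
    show ?thesis unfolding r1 r2 c1 c2 using Cons.IH[OF IC] by simp
  qed
  then show ?case by (simp only: zeta_comp.simps) (rule sum.cong, auto)
qed

theorem mainTheorem3:
  fixes n :: nat and E :: "nat \<Rightarrow> nat \<Rightarrow> bool" and M :: "nat set"
    and q :: "'a::comm_ring_1" and k :: nat
  assumes "simple_graph_on {1..n} E"
    and "connected_on {1..n} E"
    and "M \<subseteq> {1..n}" and "induced_path E M"
    and "\<forall>M'. M' \<subseteq> {1..n} \<and> induced_path E M' \<longrightarrow> card M' \<le> card M"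
    and "card M \<le> k"
  shows "Psi k q (one_graph n E) = Psi (card M - 1) q (one_graph n E)"
proof -
  have bound: "\<And>H u v. Inv n E H \<Longrightarrow> snd H u v \<le> card M - 1"
    using Inv_bound[OF assms(1) _ assms(5)] by blast
  have km: "card M - 1 \<le> k" using assms(6) by simp
  have eq: "\<And>\<alpha>. zeta_comp k q \<alpha> (one_graph n E) = zeta_comp (card M - 1) q \<alpha> (one_graph n E)"
    using zc_eq[OF bound km Inv_one[OF assms(1)]] .
  show ?thesis unfolding Psi_def by (intro ext) (simp only: eq)
qed

end
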